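(* Let $n\ge1$ and let $H\subseteq Q_n$ be any set of more than $2^{n-1}$ vertices. Then the subgraph of $Q_n$ induced on $H$ has a vertex of degree at least $\sqrt{n}$; that is, there exists $\beta\in H$ such that $\#\{\gamma\in H:\gamma\text{ and }\beta\text{ differ in exactly one coordinate}\}\ge\sqrt{n}$.
   Context: $Q_n=\{0,1\}^n$ is the boolean cube, viewed as a graph in which two vertices are adjacent iff they differ in exactly one coordinate. *)

theory Defs
  imports Complex_Main
begin

definition cube :: "nat \<Rightarrow> bool list set" where
  "cube n = {xs. length xs = n}"

definition cube_adj :: "nat \<Rightarrow> bool list \<Rightarrow> bool list \<Rightarrow> bool" where
  "cube_adj n x y \<longleftrightarrow> card {i. i < n \<and> x ! i \<noteq> y ! i} = 1"

end

theory Submission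
  imports Defs
begin

lemma cube_0: "cube 0 = {[]}" unfolding cube_def by auto

lemma cube_Suc: "cube (Suc m) = Cons False ` cube m \<union> Cons True ` cube m"
proof
  show "cube (Suc m) \<subseteq> Cons False ` cube m \<union> Cons True ` cube m"
  proof
    fix x assume "x \<in> cube (Suc m)"
    then obtain b z where "x = b # z" "length z = m" unfolding cube_def by (auto simp: length_Suc_conv)
    then show "x \<in> Cons False ` cube m \<union> Cons True ` cube m" unfolding cube_def by (cases b) auto
  qed
qed (auto simp: cube_def)

lemma finite_cube: "finite (cube m)"
  by (induction m) (auto simp: cube_0 cube_Suc)

lemma card_cube: "card (cube m) = 2 ^ m"
proof (induction m)
  case 0 then show ?case by (simp add: cube_0)
next
  case (Suc m)
  have "card (cube (Suc m)) = card (Cons False ` cube m) + card (Cons True ` cube m)"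
    unfolding cube_Suc by (rule card_Un_disjoint) (auto simp: finite_cube)
  also have "\<dots> = 2 ^ m + 2 ^ m" by (simp add: card_image Suc)
  finally show ?case by simp
qed

lemma sum_cube_Suc: "sum f (cube (Suc m)) = (\<Sum>z\<in>cube m. f (False # z)) + (\<Sum>z\<in>cube m. f (True # z))"
proof -
  have "sum f (cube (Suc m)) = sum f (Cons False ` cube m) + sum f (Cons True ` cube m)"
    unfolding cube_Suc by (rule sum.union_disjoint) (auto simp: finite_cube)
  also have "\<dots> = (\<Sum>z\<in>cube m. f (False # z)) + (\<Sum>z\<in>cube m. f (True # z))"
    by (simp add: sum.reindex)
  finally show ?thesis .
qed

fun sA :: "bool list \<Rightarrow> bool list \<Rightarrow> real" where
  "sA (a#x) (b#y) = (if a = b then (if a then - sA x y else sA x y) else (if x = y then 1 else 0))"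
| "sA _ _ = 0"

lemma sA_bound: "\<bar>sA x y\<bar> \<le> 1"
  by (induction x y rule: sA.induct) auto

lemma diff_set_Cons: "{i. i < Suc k \<and> (a#x)!i \<noteq> (b#y)!i} = (if a \<noteq> b then {0} else {}) \<union> Suc ` {i. i < k \<and> x!i \<noteq> y!i}"
proof (rule set_eqI)
  fix i show "i \<in> {i. i < Suc k \<and> (a#x)!i \<noteq> (b#y)!i} \<longleftrightarrow> i \<in> (if a \<noteq> b then {0} else {}) \<union> Suc ` {i. i < k \<and> x!i \<noteq> y!i}"
    by (cases i) auto
qed

lemma sA_adj: "sA x y \<noteq> 0 \<Longrightarrow> length x = length y \<and> card {i. i < length x \<and> x!i \<noteq> y!i} = 1"
proof (induction x y rule: sA.induct)
  case (1 a x b y)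
  show ?case
  proof (cases "a = b")
    case True
    with 1 have h: "length x = length y \<and> card {i. i < length x \<and> x!i \<noteq> y!i} = 1" by (auto split: if_splits)
    have "{i. i < length (a#x) \<and> (a#x)!i \<noteq> (b#y)!i} = Suc ` {i. i < length x \<and> x!i \<noteq> y!i}"
      using True diff_set_Cons[of "length x" a x b y] by simp
    then have "card {i. i < length (a#x) \<and> (a#x)!i \<noteq> (b#y)!i} = card {i. i < length x \<and> x!i \<noteq> y!i}"
      by (simp add: card_image)
    then show ?thesis using h by (metis length_Cons)
  next
    case False
    with 1 have "x = y" by (auto split: if_splits)
    have "{i. i < length (a#x) \<and> (a#x)!i \<noteq> (b#y)!i} = {0}"
      using False \<open>x = y\<close> diff_set_Cons[of "length x" a x b y] by simp
    then show ?thesis using \<open>x = y\<close> by simp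
  qed
qed auto

lemma ind_sum1: "finite S \<Longrightarrow> a \<in> S \<Longrightarrow> (\<Sum>z\<in>S. (if a = z then 1 else 0) * f z) = (f a :: real)"
proof -
  assume "finite S" "a \<in> S"
  have "(\<Sum>z\<in>S. (if a = z then 1 else 0) * f z) = (\<Sum>z\<in>S. if z = a then f z else 0)" by (rule sum.cong) auto
  then show ?thesis using \<open>finite S\<close> \<open>a \<in> S\<close> by simp
qed

lemma ind_sum2: "finite S \<Longrightarrow> a \<in> S \<Longrightarrow> (\<Sum>z\<in>S. f z * (if z = a then 1 else 0)) = (f a :: real)"
proof -
  assume "finite S" "a \<in> S"
  have "(\<Sum>z\<in>S. f z * (if z = a then 1 else 0)) = (\<Sum>z\<in>S. if z = a then f z else 0)" by (rule sum.cong) auto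
  then show ?thesis using \<open>finite S\<close> \<open>a \<in> S\<close> by simp
qed

lemma sA_sq: "x \<in> cube n \<Longrightarrow> y \<in> cube n \<Longrightarrow> (\<Sum>z\<in>cube n. sA x z * sA z y) = (if x = y then real n else 0)"
proof (induction n arbitrary: x y)
  case 0 then show ?case by (simp add: cube_0)
next
  case (Suc m)
  from Suc.prems obtain a x' where x: "x = a # x'" "x' \<in> cube m" unfolding cube_Suc by auto
  from Suc.prems obtain b y' where y: "y = b # y'" "y' \<in> cube m" unfolding cube_Suc by auto
  note IH = Suc.IH[OF x(2) y(2)]
  show ?case
    unfolding sum_cube_Suc x(1) y(1)
    using IH x(2) y(2)
    by (cases a; cases b) (auto simp: ind_sum1 ind_sum2 finite_cube sum_negf)
qed

lemma underdetermined:
  fixes F :: "('u \<Rightarrow> real) set"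
  shows "finite F \<Longrightarrow> finite U \<Longrightarrow> card F < card U \<Longrightarrow> \<exists>u. (\<exists>j\<in>U. u j \<noteq> 0) \<and> (\<forall>c\<in>F. (\<Sum>j\<in>U. c j * u j) = 0)"
proof (induction "card F" arbitrary: F U rule: less_induct)
  case less
  show ?case
  proof (cases "F = {}")
    case True
    then have "U \<noteq> {}" using less by auto
    then show ?thesis using True by (intro exI[of _ "\<lambda>_. 1"]) auto
  next
  case Fne: False
  then obtain c where cin: "c \<in> F" by blast
  define F0 where "F0 = F - {c}"
  have fF0: "finite F0" using less F0_def by simp
  have cF0: "card F0 < card F" proof -
    have "card F > 0" using less(2) cin card_gt_0_iff by blast
    then show ?thesis using less(2) cin F0_def by simp
  qed
  have FF0: "F = insert c F0" using cin F0_def by blast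
  show ?thesis
  proof (cases "\<forall>j\<in>U. c j = 0")
    case True
    from less.hyps[OF cF0 fF0 less.prems(2)] cF0 less.prems obtain u where u: "\<exists>j\<in>U. u j \<noteq> 0" "\<forall>d\<in>F0. (\<Sum>j\<in>U. d j * u j) = 0" by force
    show ?thesis using u True FF0 by (intro exI[of _ u]) auto
  next
    case False
    then obtain j0 where j0: "j0 \<in> U" "c j0 \<noteq> 0" by blast
    define U' where "U' = U - {j0}"
    define F' where "F' = (\<lambda>d. \<lambda>j. d j - d j0 * c j / c j0) ` F0"
    have fU': "finite U'" using less.prems U'_def by simp
    have cU': "card U' = card U - 1" using j0 less.prems U'_def by simp
    have "card F' \<le> card F0" unfolding F'_def by (rule card_image_le) fact
    then have cF': "card F' < card U'" "card F' < card F" using cF0 cU' less.prems by linarith+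
    have fF': "finite F'" using fF0 F'_def by simp
    from less.hyps[OF cF'(2) fF' fU' cF'(1)] obtain u' where u': "\<exists>j\<in>U'. u' j \<noteq> 0" "\<forall>d\<in>F'. (\<Sum>j\<in>U'. d j * u' j) = 0"
      by blast
    define S where "S = (\<Sum>j\<in>U'. c j * u' j)"
    define u where "u = u'(j0 := - S / c j0)"
    have split: "(\<Sum>j\<in>U. d j * u j) = d j0 * (- S / c j0) + (\<Sum>j\<in>U'. d j * u' j)" for d
    proof -
      have "(\<Sum>j\<in>U. d j * u j) = d j0 * u j0 + (\<Sum>j\<in>U'. d j * u j)"
        unfolding U'_def using j0 less.prems by (simp add: sum.remove)
      also have "(\<Sum>j\<in>U'. d j * u j) = (\<Sum>j\<in>U'. d j * u' j)"
        by (rule sum.cong) (auto simp: u_def U'_def)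
      finally show ?thesis by (simp add: u_def)
    qed
    show ?thesis
    proof (intro exI[of _ u] conjI ballI)
      show "\<exists>j\<in>U. u j \<noteq> 0" using u' by (auto simp: u_def U'_def)
    next
      fix d assume "d \<in> F"
      then consider "d = c" | "d \<in> F0" using FF0 by blast
      then show "(\<Sum>j\<in>U. d j * u j) = 0"
      proof cases
        case 1 then show ?thesis using split[of c] j0 by (simp add: S_def)
      next
        case 2
        then have "(\<Sum>j\<in>U'. (d j - d j0 * c j / c j0) * u' j) = 0" using u' F'_def by auto
        then have "(\<Sum>j\<in>U'. d j * u' j) - d j0 / c j0 * S = 0"
          by (simp add: S_def algebra_simps sum_subtractf sum_distrib_left sum_divide_distrib)
        then show ?thesis using split[of d] j0 by (simp add: field_simps)
      qed
    qed
  qed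
  qed
qed


theorem mainTheorem3:
  fixes n :: nat and H :: "bool list set"
  assumes "n \<ge> 1"
    and "H \<subseteq> cube n"
    and "card H > 2 ^ (n - 1)"
  shows "\<exists>\<beta>\<in>H. real (card {\<gamma>\<in>H. cube_adj n \<gamma> \<beta>}) \<ge> sqrt (real n)"
proof -
  obtain m where nm: "n = Suc m" using assms(1) by (cases n) auto
  define s where "s = sqrt (real n)"
  have ss: "s * s = real n" unfolding s_def by simp
  have s0: "s \<ge> 0" unfolding s_def by simp
  define B where "B = cube n - H"
  have fH: "finite H" using assms(2) finite_cube finite_subset by blast
  have cB: "card B < 2 ^ m"
  proof -
    have "card B = card (cube n) - card H" unfolding B_def using assms(2) fH by (simp add: card_Diff_subset)
    moreover have "(0::nat) < 2 ^ m" by simp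
    ultimately show ?thesis using assms(3) unfolding card_cube nm by (simp, linarith)
  qed
  define coef where "coef = (\<lambda>\<beta> w. sA \<beta> (False # w) + (if \<beta> = False # w then s else 0))"
  have "card (coef ` B) \<le> card B" by (rule card_image_le) (simp add: B_def finite_cube)
  then have "card (coef ` B) < card (cube m)" using cB by (simp add: card_cube)
  moreover have "finite (coef ` B)" by (simp add: B_def finite_cube)
  ultimately obtain u where u: "\<exists>j\<in>cube m. u j \<noteq> 0" "\<forall>c\<in>coef ` B. (\<Sum>j\<in>cube m. c j * u j) = 0"
    using underdetermined[of "coef ` B" "cube m"] finite_cube by blast
  define y where "y = (\<lambda>\<gamma>::bool list. if \<gamma> \<noteq> [] \<and> \<not> hd \<gamma> then u (tl \<gamma>) else 0)"
  have yF: "y (False # z) = u z" and yT: "y (True # z) = 0" for z by (simp_all add: y_def)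
  define x where "x = (\<lambda>\<beta>. (\<Sum>\<gamma>\<in>cube n. sA \<beta> \<gamma> * y \<gamma>) + s * y \<beta>)"
  have Ay: "(\<Sum>\<gamma>\<in>cube n. sA \<beta> \<gamma> * y \<gamma>) = (\<Sum>z\<in>cube m. sA \<beta> (False # z) * u z)" for \<beta>
    unfolding nm sum_cube_Suc by (simp add: yF yT)
  have fact1: "x \<beta> = (\<Sum>w\<in>cube m. coef \<beta> w * u w)" if "\<beta> \<in> cube n" for \<beta>
  proof -
    have "s * y \<beta> = (\<Sum>w\<in>cube m. (if \<beta> = False # w then s else 0) * u w)"
    proof -
      from that obtain b z where bz: "\<beta> = b # z" "z \<in> cube m" unfolding nm cube_Suc by auto
      show ?thesis
      proof (cases b)
        case True then show ?thesis using bz by (simp add: yT)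
      next
        case False
        have "(\<Sum>w\<in>cube m. (if \<beta> = False # w then s else 0) * u w) = (\<Sum>w\<in>cube m. if w = z then s * u w else 0)"
          by (rule sum.cong) (auto simp: bz False)
        then show ?thesis using bz False by (simp add: yF finite_cube)
      qed
    qed
    then show ?thesis unfolding x_def Ay coef_def by (simp add: distrib_right sum.distrib)
  qed
  have fact2: "x (True # w) = u w" if "w \<in> cube m" for w
  proof -
    have "x (True # w) = (\<Sum>z\<in>cube m. (if w = z then 1 else 0) * u z)"
      unfolding x_def Ay by (simp add: yT)
    also have "\<dots> = u w" using that by (simp add: ind_sum1 finite_cube)
    finally show ?thesis .
  qed
  have fact3: "(\<Sum>\<gamma>\<in>cube n. sA \<beta> \<gamma> * x \<gamma>) = s * x \<beta>" if "\<beta> \<in> cube n" for \<beta>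
  proof -
    have "(\<Sum>\<gamma>\<in>cube n. sA \<beta> \<gamma> * x \<gamma>)
        = (\<Sum>\<gamma>\<in>cube n. \<Sum>\<delta>\<in>cube n. sA \<beta> \<gamma> * sA \<gamma> \<delta> * y \<delta>) + s * (\<Sum>\<gamma>\<in>cube n. sA \<beta> \<gamma> * y \<gamma>)"
      unfolding x_def by (simp add: algebra_simps sum.distrib sum_distrib_left)
    also have "(\<Sum>\<gamma>\<in>cube n. \<Sum>\<delta>\<in>cube n. sA \<beta> \<gamma> * sA \<gamma> \<delta> * y \<delta>)
        = (\<Sum>\<delta>\<in>cube n. (\<Sum>\<gamma>\<in>cube n. sA \<beta> \<gamma> * sA \<gamma> \<delta>) * y \<delta>)"
      by (subst sum.swap) (simp add: sum_distrib_right)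
    also have "\<dots> = (\<Sum>\<delta>\<in>cube n. if \<delta> = \<beta> then real n * y \<delta> else 0)"
      by (rule sum.cong) (auto simp: sA_sq that)
    also have "\<dots> = real n * y \<beta>" using that by (simp add: finite_cube)
    finally show ?thesis unfolding x_def using ss by (simp add: algebra_simps)
  qed
  have fact4: "x \<beta> = 0" if "\<beta> \<in> B" for \<beta>
    using fact1[of \<beta>] that u(2) B_def by auto
  define M where "M = Max ((\<lambda>\<gamma>. \<bar>x \<gamma>\<bar>) ` cube n)"
  have "cube n \<noteq> {}" using card_cube[of n] by auto
  then have "M \<in> (\<lambda>\<gamma>. \<bar>x \<gamma>\<bar>) ` cube n" unfolding M_def by (simp add: finite_cube)
  then obtain \<beta> where \<beta>: "\<beta> \<in> cube n" "\<bar>x \<beta>\<bar> = M" by auto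
  have Mge: "\<bar>x \<gamma>\<bar> \<le> M" if "\<gamma> \<in> cube n" for \<gamma>
    unfolding M_def using that by (simp add: finite_cube)
  obtain w where w: "w \<in> cube m" "u w \<noteq> 0" using u(1) by blast
  have "True # w \<in> cube n" using w unfolding nm cube_Suc by auto
  then have Mpos: "M > 0" using Mge[of "True # w"] fact2[OF w(1)] w(2) by auto
  have \<beta>H: "\<beta> \<in> H" proof (rule ccontr)
    assume "\<beta> \<notin> H"
    then have "x \<beta> = 0" using fact4[of \<beta>] \<beta>(1) B_def by blast
    then show False using \<beta>(2) Mpos by simp
  qed
  define N where "N = {\<gamma>\<in>H. cube_adj n \<gamma> \<beta>}"
  have NH: "N \<subseteq> cube n" using assms(2) N_def by auto
  have "s * M = \<bar>\<Sum>\<gamma>\<in>cube n. sA \<beta> \<gamma> * x \<gamma>\<bar>" using fact3[OF \<beta>(1)] \<beta>(2) s0 by (simp add: abs_mult)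
  also have "\<dots> \<le> (\<Sum>\<gamma>\<in>cube n. \<bar>sA \<beta> \<gamma> * x \<gamma>\<bar>)" by (rule sum_abs)
  also have "\<dots> \<le> (\<Sum>\<gamma>\<in>cube n. if \<gamma> \<in> N then M else 0)"
  proof (rule sum_mono)
    fix \<gamma> assume g: "\<gamma> \<in> cube n"
    show "\<bar>sA \<beta> \<gamma> * x \<gamma>\<bar> \<le> (if \<gamma> \<in> N then M else 0)"
    proof (cases "sA \<beta> \<gamma> = 0 \<or> \<gamma> \<notin> H")
      case True
      then show ?thesis using fact4[of \<gamma>] g B_def Mpos by auto
    next
      case False
      then have a: "card {i. i < length \<beta> \<and> \<beta>!i \<noteq> \<gamma>!i} = 1" using sA_adj by blast
      have "length \<beta> = n" using \<beta>(1) cube_def by simp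
      moreover have "{i. i < n \<and> \<gamma>!i \<noteq> \<beta>!i} = {i. i < n \<and> \<beta>!i \<noteq> \<gamma>!i}" by auto
      ultimately have "cube_adj n \<gamma> \<beta>" using a unfolding cube_adj_def by simp
      then have "\<gamma> \<in> N" using False N_def by auto
      moreover have "\<bar>sA \<beta> \<gamma> * x \<gamma>\<bar> \<le> 1 * M"
        unfolding abs_mult by (rule mult_mono) (use sA_bound Mge g in auto)
      ultimately show ?thesis by simp
    qed
  qed
  also have "\<dots> = real (card N) * M"
  proof -
    have "(\<Sum>\<gamma>\<in>cube n. if \<gamma> \<in> N then M else 0) = (\<Sum>\<gamma>\<in>{\<gamma>\<in>cube n. \<gamma> \<in> N}. M)"
      by (rule sum.inter_filter[symmetric]) (simp add: finite_cube)
    also have "{\<gamma>\<in>cube n. \<gamma> \<in> N} = N" using NH by auto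
    finally show ?thesis by simp
  qed
  finally have "s \<le> real (card N)" using Mpos by simp
  then show ?thesis using \<beta>H unfolding N_def s_def by blast
qed

end
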